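(* Let $h\ge 2$, let $k,l$ be positive integers with $k+l\le 2h-1$, and let $d_1,\dots,d_k,e_1,\dots,e_l$ be positive integers with $d_1+\dots+d_k=e_1+\dots+e_l\le h$. Then with probability $1$ the equation \[ d_1x_1+\dots+d_kx_k = e_1x_{k+1}+\dots+e_lx_{k+l} \] has only finitely many solutions $(x_1,\dots,x_{k+l})$ with $x_1,\dots,x_{k+l}$ pairwise distinct elements of $B$.
   Context: Fix an integer $h\ge 2$. Let $B$ be a random set of positive integers in which the events $\{n\in B\}$, $n=1,2,\dots$, are mutually independent and $\mathbb{P}(n\in B)=n^{-\frac{4h-3}{4h-1}}$. *)

theory Defs
  imports "HOL-Probability.Probability"
begin

text \<open>Solutions (x_1,...,x_{k+l}) encoded as lists of length k+l (x_{i+1} = xs ! i),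
  with pairwise distinct entries from the set S, of
  d_1 x_1 + ... + d_k x_k = e_1 x_{k+1} + ... + e_l x_{k+l}.
  Coefficients are indexed from 0: d 0, ..., d (k-1) and e 0, ..., e (l-1).\<close>
definition distinct_solutions ::
  "nat \<Rightarrow> nat \<Rightarrow> (nat \<Rightarrow> nat) \<Rightarrow> (nat \<Rightarrow> nat) \<Rightarrow> nat set \<Rightarrow> nat list set" where
  "distinct_solutions k l d e S =
     {xs. length xs = k + l \<and> distinct xs \<and> set xs \<subseteq> S \<and>
          (\<Sum>i<k. d i * xs ! i) = (\<Sum>j<l. e j * xs ! (k + j))}"

end

theory Submission imports Defs "HOL-Analysis.Summation_Tests" begin

lemma sum_lists_prod:
  fixes g :: "nat \<Rightarrow> real"
  assumes "finite A"
  shows "(\<Sum>ys\<in>{ys. set ys \<subseteq> A \<and> length ys = n}. \<Prod>i<n. g (ys!i)) = (sum g A)^n"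
proof (induction n)
  case 0
  have "{ys. set ys \<subseteq> A \<and> length ys = 0} = {[]}" by auto
  then show ?case by simp
next
  case (Suc n)
  let ?S = "{ys. set ys \<subseteq> A \<and> length ys = n}"
  have inj: "inj_on (\<lambda>(xs, n). n#xs) (?S \<times> A)" by (auto simp: inj_on_def)
  have "(\<Sum>ys\<in>{ys. set ys \<subseteq> A \<and> length ys = Suc n}. \<Prod>i<Suc n. g (ys!i))
      = (\<Sum>p\<in>?S \<times> A. \<Prod>i<Suc n. g ((snd p # fst p)!i))"
    unfolding lists_length_Suc_eq by (subst sum.reindex[OF inj]) (simp add: case_prod_beta)
  also have "\<dots> = (\<Sum>p\<in>?S \<times> A. g (snd p) * (\<Prod>i<n. g (fst p ! i)))"
    by (simp only: prod.lessThan_Suc_shift nth_Cons_0 nth_Cons_Suc)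
  also have "\<dots> = (\<Sum>ys\<in>?S. \<Sum>x\<in>A. g x * (\<Prod>i<n. g (ys ! i)))"
    by (simp add: sum.cartesian_product case_prod_beta)
  also have "\<dots> = (\<Sum>ys\<in>?S. (\<Prod>i<n. g (ys ! i))) * sum g A"
    by (simp add: sum_distrib_left sum_distrib_right mult.commute)
  finally show ?case using Suc by simp
qed

lemma pointwise_bound:
  fixes xs :: "nat list" and \<alpha> :: real
  assumes n2: "n \<ge> 2" and apos: "\<alpha> > 0" and len: "length xs = n" and pos: "set xs \<subseteq> {1..}"
    and m: "m < n" and mx: "\<And>i. i < n \<Longrightarrow> xs!i \<le> xs!m"
  shows "(\<Prod>i<n. real (xs!i) powr (-\<alpha>))
         \<le> (\<Prod>i<n. real (xs[m:=1] ! i) powr (-(\<alpha> + \<alpha>/(real n - 1))))"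
proof -
  define I where "I = {..<n} - {m}"
  define X where "X = real (xs!m)"
  define \<beta> where "\<beta> = \<alpha>/(real n - 1)"
  have cardI: "card I = n - 1" using m by (simp add: I_def)
  have xpos: "\<And>i. i < n \<Longrightarrow> real (xs!i) \<ge> 1" using pos len
    by (metis atLeast_iff nth_mem of_nat_1 of_nat_le_iff subsetD)
  have X1: "X \<ge> 1" using xpos[OF m] by (simp add: X_def)
  have bpos: "\<beta> > 0" using apos n2 by (simp add: \<beta>_def)
  have "(\<Prod>i<n. real (xs!i) powr (-\<alpha>)) = X powr (-\<alpha>) * (\<Prod>i\<in>I. real (xs!i) powr (-\<alpha>))"
    unfolding I_def X_def using m by (subst prod.remove[of _ m]) auto
  also have "X powr (-\<alpha>) = (\<Prod>i\<in>I. X powr (-\<beta>))"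
  proof -
    have "(\<Prod>i\<in>I. X powr (-\<beta>)) = (X powr (-\<beta>)) ^ (n-1)" by (simp add: cardI)
    also have "\<dots> = (X powr (-\<beta>)) powr (real (n-1))" using X1 by (simp add: powr_realpow)
    also have "\<dots> = X powr (-\<alpha>)" using n2 by (simp add: powr_powr \<beta>_def of_nat_diff)
    finally show ?thesis by simp
  qed
  also have "(\<Prod>i\<in>I. X powr (-\<beta>)) * (\<Prod>i\<in>I. real (xs!i) powr (-\<alpha>))
      = (\<Prod>i\<in>I. X powr (-\<beta>) * real (xs!i) powr (-\<alpha>))" by (simp add: prod.distrib)
  also have "\<dots> \<le> (\<Prod>i\<in>I. real (xs!i) powr (-\<beta>) * real (xs!i) powr (-\<alpha>))"
  proof (rule prod_mono)
    fix i assume i: "i \<in> I"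
    hence "i < n" by (simp add: I_def)
    have "X powr (-\<beta>) \<le> real (xs!i) powr (-\<beta>)"
      unfolding X_def using bpos xpos[OF \<open>i<n\<close>] mx[OF \<open>i<n\<close>] by (intro powr_mono2') auto
    then show "0 \<le> X powr (-\<beta>) * real (xs!i) powr (-\<alpha>) \<and>
      X powr (-\<beta>) * real (xs!i) powr (-\<alpha>) \<le> real (xs!i) powr (-\<beta>) * real (xs!i) powr (-\<alpha>)"
      by (intro conjI mult_right_mono) auto
  qed
  also have "\<dots> = (\<Prod>i\<in>I. real (xs[m:=1]!i) powr (-(\<alpha> + \<beta>)))"
  proof (rule prod.cong)
    fix i assume i: "i \<in> I"
    hence "i < n" "i \<noteq> m" by (auto simp: I_def)
    then have "xs[m:=1]!i = xs!i" by simp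
    moreover have "real (xs!i) > 0" using xpos[OF \<open>i<n\<close>] by simp
    ultimately show "real (xs!i) powr (-\<beta>) * real (xs!i) powr (-\<alpha>) = real (xs[m:=1]!i) powr (-(\<alpha> + \<beta>))"
      by (simp add: powr_add[symmetric] add.commute)
  qed simp
  also have "\<dots> = (\<Prod>i<n. real (xs[m:=1]!i) powr (-(\<alpha> + \<beta>)))"
    unfolding I_def using m len by (subst prod.remove[of _ m]) auto
  finally show ?thesis by (simp add: \<beta>_def)
qed

lemma key_bound:
  fixes F :: "nat list set" and \<alpha> :: real
  assumes n2: "n \<ge> 2" and apos: "\<alpha> > 0" and cond: "\<alpha> * real n > real n - 1"
    and fin: "finite F"
    and Fprop: "\<And>xs. xs \<in> F \<Longrightarrow> length xs = n \<and> set xs \<subseteq> {1..}"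
    and inj: "\<And>m xs ys. m < n \<Longrightarrow> xs \<in> F \<Longrightarrow> ys \<in> F \<Longrightarrow>
                (\<And>i. i < n \<Longrightarrow> i \<noteq> m \<Longrightarrow> xs!i = ys!i) \<Longrightarrow> xs = ys"
  shows "(\<Sum>xs\<in>F. \<Prod>i<n. real (xs!i) powr (-\<alpha>))
     \<le> real n * (\<Sum>y. real y powr (-(\<alpha> + \<alpha>/(real n - 1))))^n"
proof -
  define \<gamma> where "\<gamma> = \<alpha> + \<alpha>/(real n - 1)"
  have "\<alpha>/(real n - 1) > 1 - \<alpha>" using n2 cond by (simp add: field_simps)
  hence g1: "\<gamma> > 1" by (simp add: \<gamma>_def)
  have summ: "summable (\<lambda>y. real y powr (-\<gamma>))" using g1 by (simp add: summable_real_powr_iff)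
  define Z where "Z = (\<Sum>y. real y powr (-\<gamma>))"
  define w where "w xs = (\<Prod>i<n. real (xs!i) powr (-\<alpha>))" for xs :: "nat list"
  define v where "v ys = (\<Prod>i<n. real (ys!i) powr (-\<gamma>))" for ys :: "nat list"
  define Fm where "Fm m = {xs\<in>F. \<forall>i<n. xs!i \<le> xs!m}" for m
  have wnn: "w xs \<ge> 0" for xs unfolding w_def by (intro prod_nonneg) auto
  have vnn: "v xs \<ge> 0" for xs unfolding v_def by (intro prod_nonneg) auto
  have ex: "\<exists>m<n. xs \<in> Fm m" if xs: "xs \<in> F" for xs
  proof -
    have len: "length xs = n" using Fprop[OF xs] by simp
    have "set xs \<noteq> {}" using len n2 by auto
    hence "Max (set xs) \<in> set xs" by simp
    then obtain m where m: "m < n" "xs!m = Max (set xs)" using len by (auto simp: in_set_conv_nth)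
    have "\<forall>i<n. xs!i \<le> xs!m" using m len by auto
    thus ?thesis using m xs by (auto simp: Fm_def)
  qed
  have step1: "(\<Sum>xs\<in>F. w xs) \<le> (\<Sum>m<n. \<Sum>xs\<in>Fm m. w xs)"
  proof -
    have "(\<Sum>xs\<in>F. w xs) \<le> (\<Sum>xs\<in>F. \<Sum>m<n. if xs \<in> Fm m then w xs else 0)"
    proof (rule sum_mono)
      fix xs assume "xs \<in> F"
      then obtain m where m: "m < n" "xs \<in> Fm m" using ex by blast
      have "w xs = (if xs \<in> Fm m then w xs else 0)" using m by simp
      also have "\<dots> \<le> (\<Sum>m<n. if xs \<in> Fm m then w xs else 0)"
        by (rule member_le_sum[where f="\<lambda>m. if xs \<in> Fm m then w xs else 0"]) (use m wnn in auto)
      finally show "w xs \<le> \<dots>" .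
    qed
    also have "\<dots> = (\<Sum>m<n. \<Sum>xs\<in>F. if xs \<in> Fm m then w xs else 0)" by (rule sum.swap)
    also have "\<dots> = (\<Sum>m<n. \<Sum>xs\<in>Fm m. w xs)"
    proof (rule sum.cong)
      fix m
      have "Fm m = {xs\<in>F. xs \<in> Fm m}" by (auto simp: Fm_def)
      then show "(\<Sum>xs\<in>F. if xs \<in> Fm m then w xs else 0) = (\<Sum>xs\<in>Fm m. w xs)"
        using sum.inter_filter[OF fin, of w "\<lambda>xs. xs \<in> Fm m"] by simp
    qed simp
    finally show ?thesis .
  qed
  define K where "K = Max (insert 1 (\<Union>xs\<in>F. set xs))"
  define L where "L = {ys. set ys \<subseteq> {1..K} \<and> length ys = n}"
  have finL: "finite L" unfolding L_def by (rule finite_lists_length_eq) simp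
  have K1: "K \<ge> 1" unfolding K_def using fin by (intro Max_ge) auto
  have Kge: "x \<le> K" if "xs \<in> F" "x \<in> set xs" for xs x
    unfolding K_def using fin that by (intro Max_ge) auto
  have step2: "(\<Sum>xs\<in>Fm m. w xs) \<le> Z^n" if m: "m < n" for m
  proof -
    have "(\<Sum>xs\<in>Fm m. w xs) \<le> (\<Sum>xs\<in>Fm m. v (xs[m:=1]))"
    proof (rule sum_mono)
      fix xs assume "xs \<in> Fm m"
      hence xs: "xs \<in> F" "\<forall>i<n. xs!i \<le> xs!m" by (auto simp: Fm_def)
      show "w xs \<le> v (xs[m:=1])" unfolding w_def v_def \<gamma>_def
        using pointwise_bound[OF n2 apos _ _ m] Fprop[OF xs(1)] xs(2) by blast
    qed
    also have "\<dots> = (\<Sum>ys\<in>(\<lambda>xs. xs[m:=1]) ` Fm m. v ys)"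
    proof -
      have "inj_on (\<lambda>xs. xs[m:=1]) (Fm m)"
      proof (rule inj_onI)
      fix xs ys assume a: "xs \<in> Fm m" "ys \<in> Fm m" "xs[m:=1] = ys[m:=1]"
      have "xs!i = ys!i" if "i < n" "i \<noteq> m" for i
      proof -
        have "xs[m:=1]!i = ys[m:=1]!i" using a(3) by simp
        thus ?thesis using that by simp
      qed
      thus "xs = ys" using inj[OF m] a(1,2) by (auto simp: Fm_def)
      qed
      thus ?thesis by (simp add: sum.reindex)
    qed
    also have "\<dots> \<le> (\<Sum>ys\<in>L. v ys)"
    proof (rule sum_mono2[OF finL])
      show "(\<lambda>xs. xs[m:=1]) ` Fm m \<subseteq> L"
      proof
        fix ys assume "ys \<in> (\<lambda>xs. xs[m:=1]) ` Fm m"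
        then obtain xs where xs: "xs \<in> F" "ys = xs[m:=1]" by (auto simp: Fm_def)
        have "set ys \<subseteq> insert 1 (set xs)" using xs(2) set_update_subset_insert by metis
        moreover have "set xs \<subseteq> {1..K}" using Fprop[OF xs(1)] Kge[OF xs(1)] by auto
        ultimately show "ys \<in> L" using K1 Fprop[OF xs(1)] xs(2) by (auto simp: L_def)
      qed
    qed (use vnn in auto)
    also have "\<dots> = (\<Sum>y\<in>{1..K}. real y powr (-\<gamma>))^n"
      unfolding L_def v_def by (rule sum_lists_prod) simp
    also have "\<dots> \<le> Z^n"
      unfolding Z_def by (intro power_mono sum_le_suminf summ sum_nonneg) auto
    finally show ?thesis .
  qed
  have "(\<Sum>xs\<in>F. w xs) \<le> (\<Sum>m<n. Z^n)" using step1 step2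
    by (meson lessThan_iff order_trans sum_mono)
  thus ?thesis by (simp add: w_def Z_def \<gamma>_def)
qed

theorem lemma8:
  fixes M :: "'w measure" and B :: "'w \<Rightarrow> nat set"
    and h k l :: nat and d e :: "nat \<Rightarrow> nat"
  assumes "prob_space M"
    and pos: "\<And>\<omega>. \<omega> \<in> space M \<Longrightarrow> 0 \<notin> B \<omega>"
    and meas: "\<And>n. {\<omega> \<in> space M. n \<in> B \<omega>} \<in> sets M"
    and indep: "prob_space.indep_events M (\<lambda>n. {\<omega> \<in> space M. n \<in> B \<omega>}) {1..}"
    and probs: "\<And>n. n \<ge> 1 \<Longrightarrow>
       measure M {\<omega> \<in> space M. n \<in> B \<omega>} = real n powr (- ((4 * real h - 3) / (4 * real h - 1)))"
    and h: "h \<ge> 2"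
    and kl: "k \<ge> 1" "l \<ge> 1" "k + l \<le> 2 * h - 1"
    and dpos: "\<And>i. i < k \<Longrightarrow> d i > 0"
    and epos: "\<And>j. j < l \<Longrightarrow> e j > 0"
    and sums: "(\<Sum>i<k. d i) = (\<Sum>j<l. e j)" "(\<Sum>i<k. d i) \<le> h"
  shows "AE \<omega> in M. finite (distinct_solutions k l d e (B \<omega>))"
proof -
  interpret prob_space M by fact
  define \<alpha> where "\<alpha> = (4 * real h - 3) / (4 * real h - 1)"
  define n where "n = k + l"
  have n2: "n \<ge> 2" using kl by (simp add: n_def)
  have h4: "4 * real h - 1 > 0" using h by simp
  have apos: "\<alpha> > 0" using h by (simp add: \<alpha>_def)
  have "k + l + 1 \<le> 2 * h" using kl h by (simp add: le_diff_conv2)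
  hence nle0: "2 * n + 2 \<le> 4 * h" unfolding n_def by simp
  hence "real (2 * n + 2) \<le> real (4 * h)" by (simp only: of_nat_le_iff)
  hence nle: "2 * real n \<le> 4 * real h - 2" by simp
  have cond: "\<alpha> * real n > real n - 1"
  proof -
    have "\<alpha> * real n - (real n - 1) = (4 * real h - 1 - 2 * real n) / (4 * real h - 1)"
      using h4 by (simp add: \<alpha>_def field_simps)
    also have "\<dots> > 0" using h4 nle by (intro divide_pos_pos) auto
    finally show ?thesis by simp
  qed
  define Sol where "Sol = distinct_solutions k l d e {1..}"
  define w where "w xs = (\<Prod>i<n. real (xs!i) powr (-\<alpha>))" for xs :: "nat list"
  define Cst where "Cst = real n * (\<Sum>y. real y powr (-(\<alpha> + \<alpha>/(real n - 1))))^n"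
  have solprop: "length xs = n \<and> set xs \<subseteq> {1..} \<and> distinct xs" if "xs \<in> Sol" for xs
    using that by (auto simp: Sol_def distinct_solutions_def n_def)
  have soleq: "(\<Sum>i<k. d i * xs ! i) = (\<Sum>j<l. e j * xs ! (k + j))" if "xs \<in> Sol" for xs
    using that by (auto simp: Sol_def distinct_solutions_def)
  have injSol: "xs = ys" if m: "m < n" and xs: "xs \<in> Sol" and ys: "ys \<in> Sol"
     and agree: "\<And>i. i < n \<Longrightarrow> i \<noteq> m \<Longrightarrow> xs!i = ys!i" for m xs ys
  proof -
    have "xs!m = ys!m"
    proof (cases "m < k")
      case True
      have R: "(\<Sum>j<l. e j * xs ! (k + j)) = (\<Sum>j<l. e j * ys ! (k + j))"
        by (rule sum.cong) (use agree True in \<open>auto simp: n_def\<close>)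
      have L: "(\<Sum>i\<in>{..<k}-{m}. d i * xs ! i) = (\<Sum>i\<in>{..<k}-{m}. d i * ys ! i)"
        by (rule sum.cong) (use agree in \<open>auto simp: n_def\<close>)
      have "(\<Sum>i<k. d i * xs ! i) = d m * xs!m + (\<Sum>i\<in>{..<k}-{m}. d i * xs ! i)"
        using True by (subst sum.remove[of _ m]) auto
      moreover have "(\<Sum>i<k. d i * ys ! i) = d m * ys!m + (\<Sum>i\<in>{..<k}-{m}. d i * ys ! i)"
        using True by (subst sum.remove[of _ m]) auto
      ultimately have "d m * xs!m = d m * ys!m" using soleq[OF xs] soleq[OF ys] R L by linarith
      thus ?thesis using dpos[OF True] by simp
    next
      case False
      define j0 where "j0 = m - k"
      have j0: "j0 < l" "m = k + j0" using False m by (auto simp: j0_def n_def)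
      have L: "(\<Sum>i<k. d i * xs ! i) = (\<Sum>i<k. d i * ys ! i)"
        by (rule sum.cong) (use agree False in \<open>auto simp: n_def\<close>)
      have R: "(\<Sum>j\<in>{..<l}-{j0}. e j * xs ! (k + j)) = (\<Sum>j\<in>{..<l}-{j0}. e j * ys ! (k + j))"
        by (rule sum.cong) (use agree j0 in \<open>auto simp: n_def\<close>)
      have "(\<Sum>j<l. e j * xs ! (k + j)) = e j0 * xs!m + (\<Sum>j\<in>{..<l}-{j0}. e j * xs ! (k + j))"
        using j0 by (subst sum.remove[of _ j0]) auto
      moreover have "(\<Sum>j<l. e j * ys ! (k + j)) = e j0 * ys!m + (\<Sum>j\<in>{..<l}-{j0}. e j * ys ! (k + j))"
        using j0 by (subst sum.remove[of _ j0]) auto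
      ultimately have "e j0 * xs!m = e j0 * ys!m" using soleq[OF xs] soleq[OF ys] R L by linarith
      thus ?thesis using epos[OF j0(1)] by simp
    qed
    then show ?thesis using agree solprop[OF xs] solprop[OF ys]
      by (metis nth_equalityI)
  qed
  have bound: "(\<Sum>xs\<in>F. w xs) \<le> Cst" if "finite F" "F \<subseteq> Sol" for F
    unfolding w_def Cst_def
  proof (rule key_bound[OF n2 apos cond \<open>finite F\<close>])
    fix xs assume "xs \<in> F" thus "length xs = n \<and> set xs \<subseteq> {1..}" using that solprop by blast
  next
    fix m xs ys assume "m < n" "xs \<in> F" "ys \<in> F" "\<And>i. i < n \<Longrightarrow> i \<noteq> m \<Longrightarrow> xs!i = ys!i"
    thus "xs = ys" using that injSol[of m xs ys] by blast
  qed
  define A where "A x = {\<omega> \<in> space M. x \<in> B \<omega>}" for x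
  define E where "E xs = {\<omega> \<in> space M. set xs \<subseteq> B \<omega>}" for xs :: "nat list"
  have indA: "prob (\<Inter>j\<in>J. A j) = (\<Prod>j\<in>J. prob (A j))"
    if "J \<subseteq> {1..}" "J \<noteq> {}" "finite J" for J
    using indep that unfolding indep_events_def A_def by blast
  have Eeq: "E xs = (\<Inter>j\<in>set xs. A j)" if "xs \<in> Sol" for xs
  proof -
    have "set xs \<noteq> {}" using solprop[OF that] n2 by auto
    then obtain x0 where x0: "x0 \<in> set xs" by (meson ex_in_conv)
    show ?thesis
    proof (intro equalityI subsetI)
      fix \<omega> assume "\<omega> \<in> (\<Inter>j\<in>set xs. A j)"
      thus "\<omega> \<in> E xs" using x0 by (auto simp: E_def A_def)
    qed (auto simp: E_def A_def)
  qed
  have Eev: "E xs \<in> events" if "xs \<in> Sol" for xs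
  proof -
    have "set xs \<noteq> {}" using solprop[OF that] n2 by auto
    thus ?thesis unfolding Eeq[OF that] A_def using meas by (intro sets.finite_INT) auto
  qed
  have probE: "prob (E xs) = w xs" if xs: "xs \<in> Sol" for xs
  proof -
    have sp: "set xs \<subseteq> {1..}" "set xs \<noteq> {}" "distinct xs" "length xs = n"
      using solprop[OF xs] n2 by auto
    have "prob (E xs) = (\<Prod>j\<in>set xs. prob (A j))" unfolding Eeq[OF xs] using sp by (intro indA) auto
    also have "\<dots> = (\<Prod>j\<in>set xs. real j powr (-\<alpha>))"
      by (rule prod.cong) (use sp probs in \<open>auto simp: A_def \<alpha>_def\<close>)
    also have "\<dots> = prod_list (map (\<lambda>j. real j powr (-\<alpha>)) xs)"
      using sp by (simp add: prod.distinct_set_conv_list)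
    also have "\<dots> = w xs"
      unfolding w_def prod.list_conv_set_nth using sp by (simp add: atLeast0LessThan)
    finally show ?thesis .
  qed
  define C where "C j = (if j \<in> to_nat ` Sol then E (from_nat j) else {})" for j :: nat
  have Cev: "C j \<in> events" for j unfolding C_def using Eev by auto
  have partial: "(\<Sum>j<N. prob (C j)) \<le> Cst" for N
  proof -
    define G where "G = {xs\<in>Sol. to_nat xs < N}"
    have eqset: "{j\<in>{..<N}. j \<in> to_nat ` Sol} = to_nat ` G" by (auto simp: G_def)
    have finG: "finite G"
    proof (rule finite_imageD)
      show "finite (to_nat ` G)" unfolding eqset[symmetric] by simp
    qed (simp add: inj_on_def)
    have "(\<Sum>j<N. prob (C j)) = (\<Sum>j<N. if j \<in> to_nat ` Sol then prob (E (from_nat j)) else 0)"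
      by (rule sum.cong) (simp_all add: C_def)
    also have "\<dots> = (\<Sum>j\<in>{j\<in>{..<N}. j \<in> to_nat ` Sol}. prob (E (from_nat j)))"
      by (rule sum.inter_filter[symmetric]) simp
    also have "\<dots> = (\<Sum>xs\<in>G. prob (E xs))" unfolding eqset
      by (simp add: sum.reindex inj_on_def)
    also have "\<dots> = (\<Sum>xs\<in>G. w xs)" by (rule sum.cong) (auto simp: G_def probE)
    also have "\<dots> \<le> Cst" using bound[OF finG] by (auto simp: G_def)
    finally show ?thesis .
  qed
  have summ: "summable (\<lambda>j. prob (C j))"
    by (rule summableI_nonneg_bounded[where x=Cst]) (use partial in auto)
  define f where "f \<omega> = (\<Sum>j. indicator (C j) \<omega> :: ennreal)" for \<omega>
  have fmeas: "f \<in> borel_measurable M" unfolding f_def using Cev by measurable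
  have "(\<integral>\<^sup>+ \<omega>. f \<omega> \<partial>M) = (\<Sum>j. emeasure M (C j))"
    unfolding f_def using Cev by (subst nn_integral_suminf) auto
  also have "\<dots> = (\<Sum>j. ennreal (prob (C j)))" by (simp add: emeasure_eq_measure)
  also have "\<dots> = ennreal (\<Sum>j. prob (C j))" using summ by (intro suminf_ennreal2) auto
  finally have "(\<integral>\<^sup>+ \<omega>. f \<omega> \<partial>M) \<noteq> \<infinity>" by simp
  then have AEf: "AE \<omega> in M. f \<omega> \<noteq> \<infinity>" by (rule nn_integral_PInf_AE[OF fmeas])
  show ?thesis
  proof (rule AE_mp[OF AEf], rule AE_I2, intro impI)
    fix \<omega> assume \<omega>: "\<omega> \<in> space M" and fin: "f \<omega> \<noteq> \<infinity>"
    let ?D = "distinct_solutions k l d e (B \<omega>)"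
    show "finite ?D"
    proof (rule ccontr)
      assume inf: "infinite ?D"
      have DS: "?D \<subseteq> Sol"
      proof
        fix xs assume xs: "xs \<in> ?D"
        have "set xs \<subseteq> {1..}"
        proof
          fix x assume "x \<in> set xs"
          hence "x \<in> B \<omega>" using xs by (auto simp: distinct_solutions_def)
          hence "x \<noteq> 0" using pos[OF \<omega>] by (metis)
          thus "x \<in> {1..}" by simp
        qed
        thus "xs \<in> Sol" using xs unfolding Sol_def distinct_solutions_def by blast
      qed
      have inC: "\<omega> \<in> C j" if jD: "j \<in> to_nat ` ?D" for j
      proof -
        obtain xs where xs: "xs \<in> ?D" "j = to_nat xs" using jD by blast
        have "xs \<in> Sol" using DS xs(1) by blast
        hence "C j = E xs" using xs(2) by (simp add: C_def)
        moreover have "set xs \<subseteq> B \<omega>" using xs(1) by (simp add: distinct_solutions_def)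
        ultimately show ?thesis using \<omega> by (simp add: E_def)
      qed
      have infT: "infinite (to_nat ` ?D)"
      proof
        assume "finite (to_nat ` ?D)"
        moreover have "inj_on to_nat ?D" by (simp add: inj_on_def)
        ultimately have "finite ?D" by (rule finite_imageD)
        thus False using inf by contradiction
      qed
      have ge: "of_nat c \<le> f \<omega>" for c
      proof -
        obtain T where T: "finite T" "card T = c" "T \<subseteq> to_nat ` ?D"
          using infinite_arbitrarily_large[OF infT] by blast
        have "(\<Sum>j\<in>T. indicator (C j) \<omega> :: ennreal) = (\<Sum>j\<in>T. 1)"
          by (rule sum.cong) (use T inC in auto)
        hence "of_nat c = (\<Sum>j\<in>T. indicator (C j) \<omega> :: ennreal)" using T by simp
        also have "\<dots> \<le> f \<omega>" unfolding f_def by (rule sum_le_suminf) (auto simp: T)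
        finally show ?thesis .
      qed
      have "f \<omega> < top" using fin by (simp add: top.not_eq_extremum)
      then obtain r where r: "r \<ge> 0" "f \<omega> = ennreal r" by (auto simp: less_top_ennreal)
      obtain c :: nat where "real c > r" using reals_Archimedean2 by blast
      moreover have "ennreal (real c) \<le> ennreal r" using ge[of c] r by (simp add: ennreal_of_nat_eq_real_of_nat)
      ultimately show False using r(1) by (simp add: ennreal_le_iff)
    qed
  qed
qed

end
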